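(* Let $n\ge 6$ and let $H_1$ be the $3$-graph on $[n]$ with edge set $\big(E(B(2,n-2))\setminus\{2ij: i,j\in[n]\setminus\{1,2,3,4,5,6\}\}\big)\cup\{345,346\}$. Then $\lambda(H_1)<\frac{\sqrt3}{18}$.
   Context: $B(2,n-2)$ is the $3$-graph on $[n]$ whose edge set is $\{e\in\binom{[n]}3: e\cap\{1,2\}\neq\emptyset\}$. For a $3$-graph $G$ on $[n]$, $\lambda(G)=\max\{\sum_{e\in E(G)}\prod_{i\in e}x_i:\sum_i x_i=1,x_i\ge0\}$. *)

theory Defs
  imports Complex_Main
begin

text \<open>Its Lagrangian is the maximum (here: supremum, which is attained by compactness)
  of the sum over edges of the product of the weights, over the standard simplex on [n].\<close>

definition lagrangian :: "nat \<Rightarrow> nat set set \<Rightarrow> real" where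
  "lagrangian n G = Sup {(\<Sum>e\<in>G. \<Prod>i\<in>e. x i) | x :: nat \<Rightarrow> real.
      (\<forall>i\<in>{1..n}. 0 \<le> x i) \<and> (\<Sum>i\<in>{1..n}. x i) = 1}"

definition B2 :: "nat \<Rightarrow> nat set set" where
  "B2 n = {e. e \<subseteq> {1..n} \<and> card e = 3 \<and> e \<inter> {1,2} \<noteq> {}}"

definition H1 :: "nat \<Rightarrow> nat set set" where
  "H1 n = (B2 n - {{2,i,j} | i j. i \<in> {1..n} - {1,2,3,4,5,6} \<and> j \<in> {1..n} - {1,2,3,4,5,6} \<and> i \<noteq> j})
           \<union> {{3,4,5},{3,4,6}}"

end

theory Submission
  imports Defs
begin

lemma bern3:
  fixes x lo hi c0 c1 c2 c3 :: real
  assumes "lo \<le> x" "x \<le> hi" "c0 \<ge> 0" "c1 \<ge> 0" "c2 \<ge> 0" "c3 \<ge> 0"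
  shows "0 \<le> c0*(hi-x)^3 + c1*(x-lo)*(hi-x)^2 + c2*(x-lo)^2*(hi-x) + c3*(x-lo)^3"
  using assms by (intro add_nonneg_nonneg mult_nonneg_nonneg) auto

definition Wf :: "real \<Rightarrow> real \<Rightarrow> real" where
  "Wf S t = (3-5*t)*(1/16 - S*(21/8 - t + 5/8*t^2)/32) + S*(1+t+t^2)/27"

definition Mf :: "real \<Rightarrow> real \<Rightarrow> real" where
  "Mf S t = (1-S)*S^2/2 + S*(1-S*(3/2 - t + 5/8*t^2))^2/4 + t^3*S^3/27"

lemma M_id: "Mf S t = Mf S 1 - S^2*(1-t)*Wf S t"
  unfolding Mf_def Wf_def by (simp add: field_simps power2_eq_square power3_eq_cube)

lemma W51: assumes "0 \<le> t" "t \<le> 1" shows "Wf (51/100) t \<ge> 0"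
proof -
  have "Wf (51/100) t = (3727/46080)*(1-t)^3 + (11867/57600)*(t-0)*(1-t)^2 + (3023/38400)*(t-0)^2*(1-t) + (13/3840)*(t-0)^3"
    unfolding Wf_def by (simp add: field_simps power2_eq_square power3_eq_cube)
  then show ?thesis using bern3[OF assms, of "3727/46080" "11867/57600" "3023/38400" "13/3840"] by simp
qed

lemma W77: assumes "0 \<le> t" "t \<le> 1" shows "Wf (77/100) t \<ge> 0"
proof -
  have "Wf (77/100) t = (3667/138240)*(1-t)^3 + (31727/172800)*(t-0)*(1-t)^2 + (17363/115200)*(t-0)^2*(1-t) + (793/11520)*(t-0)^3"
    unfolding Wf_def by (simp add: field_simps power2_eq_square power3_eq_cube)
  then show ?thesis using bern3[OF assms, of "3667/138240" "31727/172800" "17363/115200" "793/11520"] by simp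
qed

lemma W47: assumes "0 \<le> t" "t \<le> 1" shows "Wf (47/100) t + 7/1000 \<ge> 0"
proof -
  have "Wf (47/100) t + 7/1000 = (332617/3456000)*(1-t)^3 + (199129/864000)*(t-0)*(1-t)^2 + (51061/576000)*(t-0)^2*(1-t) + (91/288000)*(t-0)^3"
    unfolding Wf_def by (simp add: field_simps power2_eq_square power3_eq_cube)
  then show ?thesis using bern3[OF assms, of "332617/3456000" "199129/864000" "51061/576000" "91/288000"] by simp
qed

lemma W_lin: "(26/100) * Wf S t = (77/100 - S) * Wf (51/100) t + (S - 51/100) * Wf (77/100) t"
  unfolding Wf_def by (simp add: field_simps power2_eq_square power3_eq_cube)

lemma W_lin2: "(4/100) * Wf S t = (51/100 - S) * Wf (47/100) t + (S - 47/100) * Wf (51/100) t"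
  unfolding Wf_def by (simp add: field_simps power2_eq_square power3_eq_cube)

lemma hlo: fixes S :: real assumes "0 \<le> S" "S \<le> 47/100" shows "(S - S^3)/4 + S^3/27 \<le> 481/5000"
proof -
  have "481/5000 - ((S - S^3)/4 + S^3/27) = (96200/103823)*(47/100-S)^3 + (171100/103823)*(S-0)*(47/100-S)^2 + (53600/103823)*(S-0)^2*(47/100-S) + (87529/11212884)*(S-0)^3"
    by (simp add: field_simps power2_eq_square power3_eq_cube)
  then show ?thesis using bern3[OF assms, of "96200/103823" "171100/103823" "53600/103823" "87529/11212884"] by linarith
qed

lemma hhi: fixes S :: real assumes "77/100 \<le> S" "S \<le> 1" shows "(S - S^3)/4 + S^3/27 \<le> 481/5000"
proof -
  have "481/5000 - ((S - S^3)/4 + S^3/27) = (99859/1314036)*(1-S)^3 + (291575/109503)*(S-77/100)*(1-S)^2 + (792400/109503)*(S-77/100)^2*(1-S) + (1597400/328509)*(S-77/100)^3"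
    by (simp add: field_simps power2_eq_square power3_eq_cube)
  then show ?thesis using bern3[OF assms, of "99859/1314036" "291575/109503" "792400/109503" "1597400/328509"] by linarith
qed

lemma M5: fixes S :: real assumes "47/100 \<le> S" "S \<le> 51/100" shows "Mf S 1 + 7/1000*S^2 \<le> 481/5000"
proof -
  have "481/5000 - (Mf S 1 + 7/1000*S^2) = (213439367/2211840)*(51/100-S)^3 + (55677881/245760)*(S-47/100)*(51/100-S)^2 + (2787995/16384)*(S-47/100)^2*(51/100-S) + (3297849/81920)*(S-47/100)^3"
    unfolding Mf_def by (simp add: field_simps power2_eq_square power3_eq_cube)
  then show ?thesis using bern3[OF assms, of "213439367/2211840" "55677881/245760" "2787995/16384" "3297849/81920"] by simp
qed

lemma M1: fixes S :: real assumes "0 \<le> S" shows "Mf S 1 \<le> 481/5000"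
proof -
  have "481/5000 - Mf S 1 = (S - 1563/2500)^2 * ((1013/6912)*S + 707773/2880000) + (9733/1600000000)*S + 281389107/2000000000000"
    unfolding Mf_def by (simp add: field_simps power2_eq_square power3_eq_cube)
  moreover have "0 \<le> (S - 1563/2500)^2 * ((1013/6912)*S + 707773/2880000)"
    using assms by (intro mult_nonneg_nonneg) auto
  ultimately show ?thesis using assms by linarith
qed

lemma final:
  fixes a b p q :: real
  assumes a0: "a \<ge> 0" and b0: "b \<ge> 0" and p0: "p \<ge> 0" and q0: "q \<ge> 0" and sum1: "a+b+p+q = 1"
  shows "a*b*(p+q) + a*(p+q)^2/2 + b*(3*p^2/8+p*q) + p^3/27 \<le> 481/5000"
proof -
  define S where "S = p+q"
  have S0: "0 \<le> S" "S \<le> 1" using assms by (auto simp: S_def)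
  have aeq: "a = 1 - S - b" using sum1 by (simp add: S_def)
  let ?P = "a*b*(p+q) + a*(p+q)^2/2 + b*(3*p^2/8+p*q) + p^3/27"
  have crude: "?P \<le> (S - S^3)/4 + S^3/27"
  proof -
    have "3*p^2/8+p*q \<le> S^2/2"
    proof -
      have "S^2/2 - (3*p^2/8+p*q) = p^2/8 + q^2/2" by (simp add: S_def power2_eq_square algebra_simps)
      moreover have "p^2/8 + q^2/2 \<ge> 0" by simp
      ultimately show ?thesis by linarith
    qed
    then have 1: "b*(3*p^2/8+p*q) \<le> b*(S^2/2)" using b0 by (rule mult_left_mono)
    have 2: "p^3 \<le> S^3" using p0 q0 by (intro power_mono) (auto simp: S_def)
    have "(1-S)^2 - 4*(a*b) = (a-b)^2" by (simp only: aeq) (simp add: power2_eq_square algebra_simps)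
    then have "a*b \<le> (1-S)^2/4" using zero_le_power2[of "a-b"] by linarith
    then have 3: "a*b*S \<le> (1-S)^2/4*S" using S0 by (intro mult_right_mono) auto
    have "?P = a*b*S + a*S^2/2 + b*(3*p^2/8+p*q) + p^3/27" by (simp add: S_def)
    also have "\<dots> \<le> (1-S)^2/4*S + a*S^2/2 + b*(S^2/2) + S^3/27" using 1 2 3 by linarith
    also have "\<dots> = (S - S^3)/4 + S^3/27" by (simp only: aeq) (simp add: field_simps power2_eq_square power3_eq_cube)
    finally show ?thesis .
  qed
  consider (lo) "S \<le> 47/100" | (hi) "S \<ge> 77/100" | (mid) "47/100 \<le> S" "S \<le> 77/100" by linarith
  then show ?thesis
  proof cases
    case lo then show ?thesis using crude hlo[OF S0(1) lo] by linarith
  next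
    case hi then show ?thesis using crude hhi[OF hi S0(2)] by linarith
  next
    case mid
    have Spos: "S > 0" using mid by linarith
    define t where "t = p/S"
    have peq: "p = t*S" using Spos by (simp add: t_def)
    have t0: "0 \<le> t" using p0 Spos by (simp add: t_def)
    have t1: "t \<le> 1" using p0 q0 Spos by (simp add: t_def S_def)
    have qeq: "q = S - t*S" using peq by (simp add: S_def)
    have "Mf S t - ?P = S*(b - (1 - S*(3/2 - t + 5/8*t^2))/2)^2"
      unfolding Mf_def aeq peq qeq
      by (simp add: field_simps power2_eq_square power3_eq_cube)
    moreover have "0 \<le> S*(b - (1 - S*(3/2 - t + 5/8*t^2))/2)^2" using S0 by simp
    ultimately have PM: "?P \<le> Mf S t" by linarith
    have Mid: "Mf S t = Mf S 1 - S^2*(1-t)*Wf S t" by (rule M_id)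
    show ?thesis
    proof (cases "S \<ge> 51/100")
      case True
      have "0 \<le> (77/100 - S) * Wf (51/100) t" using mid W51[OF t0 t1] by simp
      moreover have "0 \<le> (S - 51/100) * Wf (77/100) t" using True W77[OF t0 t1] by simp
      ultimately have "0 \<le> Wf S t" using W_lin[of S t] by linarith
      then have "0 \<le> S^2*(1-t)*Wf S t" using t1 by simp
      then show ?thesis using PM Mid M1[OF S0(1)] by linarith
    next
      case False
      have "0 \<le> (51/100 - S) * (Wf (47/100) t + 7/1000)" using False W47[OF t0 t1] by simp
      moreover have "0 \<le> (S - 47/100) * (Wf (51/100) t + 7/1000)" using mid W51[OF t0 t1] by simp
      ultimately have "-7/1000 \<le> Wf S t" using W_lin2[of S t] by (simp add: algebra_simps)
      then have "S^2*(1-t)*(-7/1000) \<le> S^2*(1-t)*Wf S t" using t1 by (intro mult_left_mono) auto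
      moreover have "S^2*(1-t)*(7/1000) \<le> S^2*(7/1000)" using mult_nonneg_nonneg[OF zero_le_power2[of S] t0] by (simp add: algebra_simps)
      ultimately show ?thesis using PM Mid M5[OF mid(1)] False by linarith
    qed
  qed
qed


definition P2 :: "nat set \<Rightarrow> nat set set" where
  "P2 V = {T. T \<subseteq> V \<and> card T = 2}"

definition gg :: "(nat \<Rightarrow> real) \<Rightarrow> nat set \<Rightarrow> real" where
  "gg x V = (\<Sum>T\<in>P2 V. \<Prod>i\<in>T. x i)"

lemma P2_empty: "P2 {} = {}"
  unfolding P2_def by auto

lemma finite_P2: "finite V \<Longrightarrow> finite (P2 V)"
  unfolding P2_def by (rule finite_subset[of _ "Pow V"]) auto

lemma P2_insert:
  assumes "v \<notin> V"
  shows "P2 (insert v V) = P2 V \<union> (\<lambda>u. {v,u}) ` V"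
proof
  show "P2 (insert v V) \<subseteq> P2 V \<union> (\<lambda>u. {v,u}) ` V"
  proof
    fix T assume "T \<in> P2 (insert v V)"
    then have T: "T \<subseteq> insert v V" "card T = 2" by (auto simp: P2_def)
    then obtain y z where yz: "T = {y,z}" "y \<noteq> z" by (auto simp: card_2_iff)
    show "T \<in> P2 V \<union> (\<lambda>u. {v,u}) ` V"
    proof (cases "v \<in> T")
      case False
      then show ?thesis using T by (auto simp: P2_def)
    next
      case True
      then show ?thesis using T yz assms by (auto simp: P2_def insert_commute)
    qed
  qed
next
  show "P2 V \<union> (\<lambda>u. {v,u}) ` V \<subseteq> P2 (insert v V)"
    using assms by (auto simp: P2_def card_insert_if)
qed

lemma gg_empty: "gg x {} = 0"
  by (simp add: gg_def P2_empty)

lemma gg_insert: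
  assumes "finite V" "v \<notin> V"
  shows "gg x (insert v V) = gg x V + x v * sum x V"
proof -
  have disj: "P2 V \<inter> (\<lambda>u. {v,u}) ` V = {}"
    using assms(2) by (auto simp: P2_def)
  have inj: "inj_on (\<lambda>u. {v,u}) V"
    using assms(2) by (auto simp: inj_on_def doubleton_eq_iff)
  have "gg x (insert v V) = (\<Sum>T\<in>P2 V. \<Prod>i\<in>T. x i) + (\<Sum>T\<in>(\<lambda>u. {v,u}) ` V. \<Prod>i\<in>T. x i)"
    unfolding gg_def P2_insert[OF assms(2)]
    by (rule sum.union_disjoint) (use assms disj finite_P2 in auto)
  also have "(\<Sum>T\<in>(\<lambda>u. {v,u}) ` V. \<Prod>i\<in>T. x i) = (\<Sum>u\<in>V. \<Prod>i\<in>{v,u}. x i)"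
    by (rule sum.reindex[OF inj, unfolded comp_def])
  also have "\<dots> = (\<Sum>u\<in>V. x v * x u)"
  proof (rule sum.cong)
    fix u assume "u \<in> V"
    then have "u \<noteq> v" using assms(2) by auto
    then show "(\<Prod>i\<in>{v,u}. x i) = x v * x u" by simp
  qed simp
  also have "\<dots> = x v * sum x V" by (simp add: sum_distrib_left)
  finally show ?thesis by (simp add: gg_def)
qed

lemma gg_bound:
  assumes "finite V" "\<forall>i\<in>V. x i \<ge> 0"
  shows "2 * gg x V \<le> (sum x V)^2"
  using assms
proof (induction V rule: finite_induct)
  case empty then show ?case by (simp add: gg_empty)
next
  case (insert v V)
  have "0 \<le> sum x V" using insert by (auto intro: sum_nonneg)
  moreover have "x v \<ge> 0" using insert by auto
  moreover have "x v * x v \<ge> 0" using insert by auto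
  moreover have "2 * gg x V \<le> (sum x V)^2" using insert by auto
  moreover have "2 * gg x (insert v V) = 2 * gg x V + 2*(x v * sum x V)"
    using insert(1,2) by (simp add: gg_insert algebra_simps)
  moreover have "(sum x (insert v V))^2 = x v * x v + 2*(x v * sum x V) + (sum x V)^2"
    using insert(1,2) by (simp add: power2_eq_square algebra_simps)
  ultimately show ?case by linarith
qed

lemma gg_union:
  assumes "finite A" "finite R" "A \<inter> R = {}"
  shows "gg x (A \<union> R) = gg x A + gg x R + sum x A * sum x R"
  using assms
proof (induction A rule: finite_induct)
  case empty then show ?case by (simp add: gg_empty)
next
  case (insert v A)
  have "gg x (insert v A \<union> R) = gg x (insert v (A \<union> R))" by simp
  also have "\<dots> = gg x (A \<union> R) + x v * sum x (A \<union> R)"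
    using insert by (intro gg_insert) auto
  also have "sum x (A \<union> R) = sum x A + sum x R"
    using insert by (intro sum.union_disjoint) auto
  finally show ?case using insert by (simp add: gg_insert algebra_simps)
qed

lemma P2_meet:
  assumes "finite A" "finite R" "A \<inter> R = {}"
  shows "(\<Sum>T\<in>{T\<in>P2 (A \<union> R). T \<inter> A \<noteq> {}}. \<Prod>i\<in>T. x i) = gg x A + sum x A * sum x R"
proof -
  have eq: "{T\<in>P2 (A \<union> R). T \<inter> A \<noteq> {}} = P2 (A \<union> R) - P2 R"
    using assms(3) by (auto simp: P2_def)
  have sub: "P2 R \<subseteq> P2 (A \<union> R)" by (auto simp: P2_def)
  have "(\<Sum>T\<in>P2 (A \<union> R) - P2 R. \<Prod>i\<in>T. x i) = gg x (A \<union> R) - gg x R"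
    unfolding gg_def using sub assms by (intro sum_diff finite_P2) auto
  then show ?thesis using eq gg_union[OF assms] by simp
qed

lemma amgm3:
  fixes u v w :: real
  assumes "u \<ge> 0" "v \<ge> 0" "w \<ge> 0"
  shows "u*v*w \<le> (u+v+w)^3/27"
proof -
  define T where "T = u+v"
  have "u*v \<le> T^2/4"
  proof -
    have "T^2/4 - u*v = (u-v)^2/4" by (simp add: T_def power2_eq_square algebra_simps)
    then show ?thesis using zero_le_power2[of "u-v"] by linarith
  qed
  then have 1: "u*v*w \<le> T^2/4*w" using assms by (intro mult_right_mono) auto
  have "4*(T+w)^3 - 27*(T^2*w) = (T-2*w)^2*(4*T+w)"
    by (simp add: power2_eq_square power3_eq_cube algebra_simps)
  moreover have "0 \<le> (T-2*w)^2*(4*T+w)" using assms by (simp add: T_def)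
  ultimately have "27*(T^2*w) \<le> 4*(T+w)^3" by linarith
  then show ?thesis using 1 by (simp add: T_def)
qed

lemma sum_Un_le:
  fixes f :: "'a \<Rightarrow> real"
  assumes "finite A" "finite B" "\<forall>e\<in>A\<union>B. f e \<ge> 0"
  shows "sum f (A \<union> B) \<le> sum f A + sum f B"
proof -
  have "sum f (A \<union> B) = sum f A + sum f B - sum f (A \<inter> B)"
    using sum_Un[OF assms(1,2)] by simp
  moreover have "sum f (A \<inter> B) \<ge> 0" using assms(3) by (intro sum_nonneg) auto
  ultimately show ?thesis by linarith
qed

lemma H1_sub:
  assumes "n \<ge> 6"
  shows "H1 n \<subseteq> ((\<lambda>j. {1,2,j}) ` {3..n} \<union> insert 1 ` P2 {3..n}) \<union>
     (insert 2 ` {T\<in>P2 {3..n}. T \<inter> {3,4,5,6} \<noteq> {}} \<union> {{3,4,5},{3,4,6}})"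
proof
  fix e assume "e \<in> H1 n"
  then consider (E) "e \<in> {{3,4,5},{3,4,6}}"
    | (B) "e \<subseteq> {1..n}" "card e = 3" "e \<inter> {1,2} \<noteq> {}"
          "e \<notin> {{2,i,j} | i j. i \<in> {1..n} - {1,2,3,4,5,6} \<and> j \<in> {1..n} - {1,2,3,4,5,6} \<and> i \<noteq> j}"
    unfolding H1_def B2_def by blast
  then show "e \<in> ((\<lambda>j. {1,2,j}) ` {3..n} \<union> insert 1 ` P2 {3..n}) \<union>
     (insert 2 ` {T\<in>P2 {3..n}. T \<inter> {3,4,5,6} \<noteq> {}} \<union> {{3,4,5},{3,4,6}})"
  proof cases
    case E then show ?thesis by blast
  next
    case B
    have fin: "finite e" using B(2) by (metis card.infinite zero_neq_numeral)
    show ?thesis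
    proof (cases "1 \<in> e")
      case True
      show ?thesis
      proof (cases "2 \<in> e")
        case True2: True
        have "card (e - {1,2}) = card e - card {1::nat,2}"
          using True True2 fin by (intro card_Diff_subset) auto
        then have "card (e - {1,2}) = 1" using B(2) by simp
        then obtain j where j: "e - {1,2} = {j}" by (auto simp: card_Suc_eq)
        then have "e = {1,2,j}" using True True2 by blast
        moreover have "j \<in> {3..n}"
        proof -
          have "j \<in> e" "j \<noteq> 1" "j \<noteq> 2" using j by auto
          then have "j \<in> {1..n}" "j \<noteq> 1" "j \<noteq> 2" using B(1) by auto
          then show ?thesis by auto
        qed
        ultimately show ?thesis by blast
      next
        case False
        define T where "T = e - {1}"
        have "card T = 2" using B(2) True by (simp add: T_def card_Diff_singleton)
        moreover have "T \<subseteq> {3..n}"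
        proof
          fix y assume "y \<in> T"
          then have "y \<in> e" "y \<noteq> 1" "y \<noteq> 2" using False by (auto simp: T_def)
          then have "y \<in> {1..n}" "y \<noteq> 1" "y \<noteq> 2" using B(1) by auto
          then show "y \<in> {3..n}" by auto
        qed
        moreover have "e = insert 1 T" using True by (auto simp: T_def)
        ultimately show ?thesis by (auto simp: P2_def)
      qed
    next
      case False
      then have two: "2 \<in> e" using B(3) by blast
      define T where "T = e - {2}"
      have cT: "card T = 2" using B(2) two by (simp add: T_def card_Diff_singleton)
      have sT: "T \<subseteq> {3..n}"
      proof
        fix y assume "y \<in> T"
        then have "y \<in> e" "y \<noteq> 1" "y \<noteq> 2" using False by (auto simp: T_def)
        then have "y \<in> {1..n}" "y \<noteq> 1" "y \<noteq> 2" using B(1) by auto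
        then show "y \<in> {3..n}" by auto
      qed
      have eT: "e = insert 2 T" using two by (auto simp: T_def)
      have "T \<inter> {3,4,5,6} \<noteq> {}"
      proof
        assume none: "T \<inter> {3,4,5,6} = {}"
        obtain i j where ij: "T = {i,j}" "i \<noteq> j" using cT by (auto simp: card_2_iff)
        have "i \<in> {1..n} - {1,2,3,4,5,6}" "j \<in> {1..n} - {1,2,3,4,5,6}"
          using ij sT none by auto
        then have "e \<in> {{2,i,j} | i j. i \<in> {1..n} - {1,2,3,4,5,6} \<and> j \<in> {1..n} - {1,2,3,4,5,6} \<and> i \<noteq> j}"
          using ij eT by blast
        then show False using B(4) by blast
      qed
      then show ?thesis using cT sT eT by (auto simp: P2_def)
    qed
  qed
qed


lemma main_bound:
  fixes n :: nat and x :: "nat \<Rightarrow> real"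
  assumes n6: "n \<ge> 6" and nn: "\<forall>i\<in>{1..n}. 0 \<le> x i" and s1: "(\<Sum>i\<in>{1..n}. x i) = 1"
  shows "(\<Sum>e\<in>H1 n. \<Prod>i\<in>e. x i) \<le> 481/5000"
proof -
  define f where "f e = (\<Prod>i\<in>e. x i)" for e :: "nat set"
  define V where "V = {3..n}"
  define A where "A = {3::nat,4,5,6}"
  define R where "R = {7..n}"
  define E12 where "E12 = (\<lambda>j. {1::nat,2,j}) ` V"
  define E1 where "E1 = insert 1 ` P2 V"
  define E2 where "E2 = insert 2 ` {T\<in>P2 V. T \<inter> A \<noteq> {}}"
  define E3 where "E3 = {{3::nat,4,5},{3,4,6}}"
  have VAR: "V = A \<union> R" "A \<inter> R = {}" using n6 by (auto simp: V_def A_def R_def)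
  have finV: "finite V" "finite A" "finite R" by (auto simp: V_def A_def R_def)
  have fin: "finite E12" "finite E1" "finite E2" "finite E3"
    using finV finite_P2 by (auto simp: E12_def E1_def E2_def E3_def)
  have Vsub: "V \<subseteq> {1..n}" by (auto simp: V_def)
  have fnn: "f e \<ge> 0" if "e \<subseteq> {1..n}" for e
    unfolding f_def using that nn by (intro prod_nonneg) auto
  have Esub: "\<forall>e \<in> (E12 \<union> E1) \<union> (E2 \<union> E3). e \<subseteq> {1..n}"
    using Vsub n6 by (auto simp: E12_def E1_def E2_def E3_def P2_def)
  have H1sub: "H1 n \<subseteq> (E12 \<union> E1) \<union> (E2 \<union> E3)"
    using H1_sub[OF n6] by (simp add: E12_def E1_def E2_def E3_def V_def A_def)
  have "sum f (H1 n) \<le> sum f ((E12 \<union> E1) \<union> (E2 \<union> E3))"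
    using H1sub fin Esub fnn by (intro sum_mono2) auto
  also have "\<dots> \<le> sum f (E12 \<union> E1) + sum f (E2 \<union> E3)"
    using fin Esub fnn by (intro sum_Un_le) auto
  also have "sum f (E12 \<union> E1) \<le> sum f E12 + sum f E1"
    using fin Esub fnn by (intro sum_Un_le) auto
  also have "sum f (E2 \<union> E3) \<le> sum f E2 + sum f E3"
    using fin Esub fnn by (intro sum_Un_le) auto
  finally have tot: "sum f (H1 n) \<le> sum f E12 + sum f E1 + (sum f E2 + sum f E3)" by linarith
  have e12: "sum f E12 = x 1 * x 2 * sum x V"
  proof -
    have inj: "inj_on (\<lambda>j. {1::nat,2,j}) V"
      by (auto simp: inj_on_def V_def insert_eq_iff doubleton_eq_iff)
    have "sum f E12 = (\<Sum>j\<in>V. f {1,2,j})"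
      unfolding E12_def by (rule sum.reindex[OF inj, unfolded comp_def])
    also have "\<dots> = (\<Sum>j\<in>V. x 1 * x 2 * x j)"
      by (rule sum.cong) (auto simp: f_def V_def)
    finally show ?thesis by (simp add: sum_distrib_left)
  qed
  have e1: "sum f E1 = x 1 * gg x V"
  proof -
    have inj: "inj_on (insert 1) (P2 V)"
    proof (rule inj_onI)
      fix T T' assume "T \<in> P2 V" "T' \<in> P2 V" "insert 1 T = insert 1 T'"
      moreover have "1 \<notin> T" "1 \<notin> T'" using \<open>T \<in> P2 V\<close> \<open>T' \<in> P2 V\<close> by (auto simp: P2_def V_def)
      ultimately show "T = T'" by (metis insert_ident)
    qed
    have "sum f E1 = (\<Sum>T\<in>P2 V. f (insert 1 T))"
      unfolding E1_def by (rule sum.reindex[OF inj, unfolded comp_def])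
    also have "\<dots> = (\<Sum>T\<in>P2 V. x 1 * (\<Prod>i\<in>T. x i))"
    proof (rule sum.cong)
      fix T assume T: "T \<in> P2 V"
      then have "finite T" "1 \<notin> T" using finV by (auto simp: P2_def V_def intro: finite_subset)
      then show "f (insert 1 T) = x 1 * (\<Prod>i\<in>T. x i)" by (simp add: f_def)
    qed simp
    finally show ?thesis by (simp add: gg_def sum_distrib_left)
  qed
  have e2: "sum f E2 = x 2 * (gg x A + sum x A * sum x R)"
  proof -
    have inj: "inj_on (insert 2) {T\<in>P2 V. T \<inter> A \<noteq> {}}"
    proof (rule inj_onI)
      fix T T' assume "T \<in> {T\<in>P2 V. T \<inter> A \<noteq> {}}" "T' \<in> {T\<in>P2 V. T \<inter> A \<noteq> {}}" "insert 2 T = insert 2 T'"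
      moreover have "2 \<notin> T" "2 \<notin> T'" using calculation by (auto simp: P2_def V_def)
      ultimately show "T = T'" by (metis insert_ident)
    qed
    have "sum f E2 = (\<Sum>T\<in>{T\<in>P2 V. T \<inter> A \<noteq> {}}. f (insert 2 T))"
      unfolding E2_def by (rule sum.reindex[OF inj, unfolded comp_def])
    also have "\<dots> = (\<Sum>T\<in>{T\<in>P2 V. T \<inter> A \<noteq> {}}. x 2 * (\<Prod>i\<in>T. x i))"
    proof (rule sum.cong)
      fix T assume T: "T \<in> {T\<in>P2 V. T \<inter> A \<noteq> {}}"
      then have "finite T" "2 \<notin> T" using finV by (auto simp: P2_def V_def intro: finite_subset)
      then show "f (insert 2 T) = x 2 * (\<Prod>i\<in>T. x i)" by (simp add: f_def)
    qed simp
    also have "\<dots> = x 2 * (\<Sum>T\<in>{T\<in>P2 (A \<union> R). T \<inter> A \<noteq> {}}. \<Prod>i\<in>T. x i)"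
      by (simp add: sum_distrib_left VAR(1))
    also have "\<dots> = x 2 * (gg x A + sum x A * sum x R)"
      using P2_meet[OF finV(2,3) VAR(2)] by simp
    finally show ?thesis .
  qed
  have e3: "sum f E3 = x 3 * x 4 * x 5 + x 3 * x 4 * x 6"
  proof -
    have "{3::nat,4,5} \<noteq> {3,4,6}"
    proof
      assume "{3::nat,4,5} = {3,4,6}"
      then have "(5::nat) \<in> {3,4,6}" by blast
      then show False by simp
    qed
    then show ?thesis by (simp add: E3_def f_def)
  qed
  have ggA: "gg x A = x 3 * (x 4 + x 5 + x 6) + x 4 * (x 5 + x 6) + x 5 * x 6"
    unfolding A_def by (simp add: gg_insert gg_empty)
  have sA: "sum x A = x 3 + x 4 + x 5 + x 6" by (simp add: A_def)
  have sV: "sum x V = sum x A + sum x R" using VAR finV by (simp add: sum.union_disjoint)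
  have s1': "x 1 + x 2 + sum x V = 1"
  proof -
    have "{1..n} = insert 1 (insert 2 V)" using n6 by (auto simp: V_def)
    then show ?thesis using s1 by (simp add: V_def)
  qed
  have x0: "x 1 \<ge> 0" "x 2 \<ge> 0" "x 3 \<ge> 0" "x 4 \<ge> 0" "x 5 \<ge> 0" "x 6 \<ge> 0" using nn n6 by auto
  have qnn: "sum x R \<ge> 0" using nn by (intro sum_nonneg) (auto simp: R_def)
  have Vnn: "\<forall>i\<in>V. x i \<ge> 0" using nn Vsub by auto
  define a where "a = x 1"
  define b where "b = x 2"
  define p where "p = sum x A"
  define q where "q = sum x R"
  have gV: "gg x V \<le> (p+q)^2/2" using gg_bound[OF finV(1) Vnn] sV by (simp add: p_def q_def)
  have gA: "gg x A \<le> 3*p^2/8"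
  proof -
    have "3*p^2/8 - gg x A = ((x 3 - x 4)^2 + (x 3 - x 5)^2 + (x 3 - x 6)^2 + (x 4 - x 5)^2 + (x 4 - x 6)^2 + (x 5 - x 6)^2)/8"
      unfolding ggA p_def sA by (simp add: power2_eq_square field_simps)
    moreover have "0 \<le> ((x 3 - x 4)^2 + (x 3 - x 5)^2 + (x 3 - x 6)^2 + (x 4 - x 5)^2 + (x 4 - x 6)^2 + (x 5 - x 6)^2)/8"
      by simp
    ultimately show ?thesis by linarith
  qed
  have t3: "x 3 * x 4 * x 5 + x 3 * x 4 * x 6 \<le> p^3/27"
  proof -
    have "x 3 * x 4 * x 5 + x 3 * x 4 * x 6 = x 3 * x 4 * (x 5 + x 6)" by (simp add: algebra_simps)
    also have "\<dots> \<le> (x 3 + x 4 + (x 5 + x 6))^3/27" using x0 by (intro amgm3) auto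
    finally show ?thesis by (simp add: p_def sA add.assoc)
  qed
  have a0: "a \<ge> 0" "b \<ge> 0" "p \<ge> 0" "q \<ge> 0" using x0 qnn by (auto simp: a_def b_def p_def sA q_def)
  have abpq: "a+b+p+q = 1" using s1' sV by (simp add: a_def b_def p_def q_def)
  have "sum f (H1 n) \<le> a*b*(p+q) + a*gg x V + (b*(gg x A + p*q) + (x 3 * x 4 * x 5 + x 3 * x 4 * x 6))"
    using tot e12 e1 e2 e3 sV by (simp add: a_def b_def p_def q_def)
  also have "\<dots> \<le> a*b*(p+q) + a*((p+q)^2/2) + (b*(3*p^2/8 + p*q) + p^3/27)"
  proof -
    have "a*gg x V \<le> a*((p+q)^2/2)" using gV a0 by (intro mult_left_mono) auto
    moreover have "b*(gg x A + p*q) \<le> b*(3*p^2/8 + p*q)" using gA a0 by (intro mult_left_mono) auto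
    ultimately show ?thesis using t3 by linarith
  qed
  also have "\<dots> \<le> 481/5000" using final[OF a0 abpq] by simp
  finally show ?thesis by (simp add: f_def)
qed

theorem lemma4p10:
  fixes n :: nat
  assumes "n \<ge> 6"
  shows "lagrangian n (H1 n) < sqrt 3 / 18"
proof -
  let ?X = "{(\<Sum>e\<in>H1 n. \<Prod>i\<in>e. x i) | x :: nat \<Rightarrow> real.
      (\<forall>i\<in>{1..n}. 0 \<le> x i) \<and> (\<Sum>i\<in>{1..n}. x i) = 1}"
  define x0 :: "nat \<Rightarrow> real" where "x0 = (\<lambda>i. if i = 1 then 1 else 0)"
  have "(\<Sum>i\<in>{1..n}. x0 i) = 1" using assms by (simp add: x0_def)
  moreover have "\<forall>i\<in>{1..n}. 0 \<le> x0 i" by (simp add: x0_def)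
  ultimately have ne: "?X \<noteq> {}" by blast
  have "Sup ?X \<le> 481/5000"
    using ne main_bound[OF assms] by (intro cSup_least) auto
  moreover have "(481/5000::real) < sqrt 3 / 18"
  proof -
    have "(481*18/5000::real) < sqrt 3"
      by (rule real_less_rsqrt) (simp add: power2_eq_square)
    then show ?thesis by simp
  qed
  ultimately show ?thesis unfolding lagrangian_def by linarith
qed

end
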